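(* If $2 \leq a \leq b$ are integers, then $a^{b-1} \cdot b^{a-1} \geq P_a(a+b-1) \cdot P_b(a+b-1)$.
   Context: $P_k(m)$ denotes the number of integer partitions of $m$ into exactly $k$ positive parts. *)

theory Defs
  imports Main "HOL-Library.Multiset"
begin

definition partitions_into :: "nat \<Rightarrow> nat \<Rightarrow> nat multiset set" where
  "partitions_into k m = {M. (\<forall>x \<in># M. 0 < x) \<and> sum_mset M = m \<and> size M = k}"

definition P :: "nat \<Rightarrow> nat \<Rightarrow> nat" where
  "P k m = card (partitions_into k m)"

end

theory Submission
  imports Defs
begin

lemma binom_le_pow:
  fixes k n :: nat
  assumes "1 \<le> k"
  shows "(n + k - 1) choose n \<le> k ^ n"
proof (induction n)
  case 0
  then show ?case by simp
next
  case (Suc n)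
  have e: "Suc n * ((Suc n + k - 1) choose Suc n) = (n + k) * ((n + k - 1) choose n)"
  proof -
    obtain j where j: "k = Suc j" using assms by (cases k) auto
    show ?thesis using Suc_times_binomial[of n "n + j"] by (simp add: j)
  qed
  have "n * 1 \<le> n * k" using assms by (rule mult_le_mono2)
  then have nk: "n + k \<le> Suc n * k" by simp
  have "(n + k) * ((n + k - 1) choose n) \<le> (Suc n * k) * k ^ n"
    using nk Suc.IH by (rule mult_le_mono)
  also have "\<dots> = Suc n * k ^ Suc n" by (simp only: mult.assoc power_Suc)
  finally have "Suc n * ((Suc n + k - 1) choose Suc n) \<le> Suc n * k ^ Suc n"
    using e by simp
  then show ?case by (simp only: mult_le_cancel1)
qed

lemma sum_list_minus1:
  "(\<forall>x\<in>set xs. 0 < (x::nat)) \<Longrightarrow> sum_list (map (\<lambda>x. x - 1) xs) + length xs = sum_list xs"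
  by (induction xs) auto

lemma map_suc_minus1:
  "(\<forall>x\<in>set xs. 0 < (x::nat)) \<Longrightarrow> map Suc (map (\<lambda>x. x - 1) xs) = xs"
  by (induction xs) auto

lemma elem_le_sum_list_nat: "(x::nat) \<in> set xs \<Longrightarrow> x \<le> sum_list xs"
  by (induction xs) auto

lemma P_le:
  fixes k n :: nat
  assumes "1 \<le> k"
  shows "P k (k + n) \<le> k ^ n"
proof -
  let ?f = "\<lambda>M. map (\<lambda>x. x - 1) (sorted_list_of_multiset M)"
  let ?B = "{l::nat list. size l = k \<and> sum_list l = n}"
  have fin: "finite ?B"
  proof (rule finite_subset)
    show "?B \<subseteq> {l. set l \<subseteq> {0..n} \<and> length l = k}"
    proof (rule subsetI, rule CollectI, rule conjI)
      fix l assume l: "l \<in> ?B"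
      show "set l \<subseteq> {0..n}"
      proof
        fix x assume "x \<in> set l"
        then have "x \<le> sum_list l" by (rule elem_le_sum_list_nat)
        then show "x \<in> {0..n}" using l by simp
      qed
      show "length l = k" using l by simp
    qed
    show "finite {l. set l \<subseteq> {0..n} \<and> length l = k}"
      by (rule finite_lists_length_eq) simp
  qed
  have inj: "inj_on ?f (partitions_into k (k + n))"
  proof (rule inj_onI)
    fix M N assume M: "M \<in> partitions_into k (k + n)" and N: "N \<in> partitions_into k (k + n)"
      and eq: "?f M = ?f N"
    have pM: "\<forall>x\<in>set (sorted_list_of_multiset M). 0 < x" using M
      by (simp add: partitions_into_def)
    have pN: "\<forall>x\<in>set (sorted_list_of_multiset N). 0 < x" using N
      by (simp add: partitions_into_def)
    have "sorted_list_of_multiset M = sorted_list_of_multiset N"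
      using map_suc_minus1[OF pM] map_suc_minus1[OF pN] eq by metis
    then show "M = N" by (metis mset_sorted_list_of_multiset)
  qed
  have img: "?f ` partitions_into k (k + n) \<subseteq> ?B"
  proof
    fix l assume "l \<in> ?f ` partitions_into k (k + n)"
    then obtain M where M: "M \<in> partitions_into k (k + n)" and l: "l = ?f M" by blast
    have pM: "\<forall>x\<in>set (sorted_list_of_multiset M). 0 < x" using M
      by (simp add: partitions_into_def)
    have len: "length (sorted_list_of_multiset M) = k"
    proof -
      have "length (sorted_list_of_multiset M) = size (mset (sorted_list_of_multiset M))"
        by (rule size_mset[symmetric])
      also have "\<dots> = size M" by simp
      finally show ?thesis using M by (simp add: partitions_into_def)
    qed
    have sm: "sum_list (sorted_list_of_multiset M) = k + n"
    proof -
      have "sum_list (sorted_list_of_multiset M) = sum_mset (mset (sorted_list_of_multiset M))"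
        by (rule sum_mset_sum_list[symmetric])
      also have "\<dots> = sum_mset M" by simp
      finally show ?thesis using M by (simp add: partitions_into_def)
    qed
    show "l \<in> ?B" using sum_list_minus1[OF pM] len sm l by simp
  qed
  have "P k (k + n) \<le> card ?B"
    unfolding P_def using card_inj_on_le[OF inj img fin] .
  also have "card ?B = (n + k - 1) choose n" by (rule card_length_sum_list)
  also have "\<dots> \<le> k ^ n" by (rule binom_le_pow[OF assms])
  finally show ?thesis .
qed

theorem corollary2p3p1:
  fixes a b :: nat
  assumes "2 \<le> a" and "a \<le> b"
  shows "a ^ (b - 1) * b ^ (a - 1) \<ge> P a (a + b - 1) * P b (a + b - 1)"
proof -
  have e1: "a + b - 1 = a + (b - 1)" using assms by linarith
  have e2: "a + b - 1 = b + (a - 1)" using assms by linarith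
  have 1: "P a (a + b - 1) \<le> a ^ (b - 1)"
    unfolding e1 by (rule P_le) (use assms in linarith)
  have 2: "P b (a + b - 1) \<le> b ^ (a - 1)"
    unfolding e2 by (rule P_le) (use assms in linarith)
  show ?thesis using mult_le_mono[OF 1 2] .
qed

end
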